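(* For $n\ge 9$, $t(K(n,3)) =\frac{n}{3}-1$. Moreover, if $S$ is a vertex cut of $K(n,3)$ such that $\frac{|S|}{c(K(n,3)\setminus S)} = \frac{n}{3}-1$, then $S$ is the complement of a maximum independent set of $K(n,3)$.
   Context: The Kneser graph $K(n,k)$ has as vertices the $k$-element subsets of $[n]=\{1,\dots,n\}$, two vertices being adjacent iff they are disjoint. A vertex cut is a set $S$ of vertices whose removal disconnects the graph; $c(G\setminus S)$ is the number of connected components after deleting $S$; the toughness is $t(G)=\min_S |S|/c(G\setminus S)$ over vertex cuts $S$. *)

theory Defs
  imports Complex_Main
begin

text \<open>A (simple) graph is given by a finite vertex set V and a symmetric
adjacency relation E, considered only on V.\<close>

definition kneser_vertices :: "nat \<Rightarrow> nat \<Rightarrow> nat set set" where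
  "kneser_vertices n k = {A. A \<subseteq> {1..n} \<and> card A = k}"

definition kneser_adj :: "nat set \<Rightarrow> nat set \<Rightarrow> bool" where
  "kneser_adj A B \<longleftrightarrow> A \<inter> B = {}"

definition del_adj :: "'a set \<Rightarrow> ('a \<Rightarrow> 'a \<Rightarrow> bool) \<Rightarrow> 'a set \<Rightarrow> 'a \<Rightarrow> 'a \<Rightarrow> bool" where
  "del_adj V E S x y \<longleftrightarrow> x \<in> V - S \<and> y \<in> V - S \<and> E x y"

definition components_del :: "'a set \<Rightarrow> ('a \<Rightarrow> 'a \<Rightarrow> bool) \<Rightarrow> 'a set \<Rightarrow> 'a set set" where
  "components_del V E S = (\<lambda>x. {y \<in> V - S. (del_adj V E S)\<^sup>*\<^sup>* x y}) ` (V - S)"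

definition num_components :: "'a set \<Rightarrow> ('a \<Rightarrow> 'a \<Rightarrow> bool) \<Rightarrow> 'a set \<Rightarrow> nat" where
  "num_components V E S = card (components_del V E S)"

definition vertex_cut :: "'a set \<Rightarrow> ('a \<Rightarrow> 'a \<Rightarrow> bool) \<Rightarrow> 'a set \<Rightarrow> bool" where
  "vertex_cut V E S \<longleftrightarrow> S \<subseteq> V \<and> num_components V E S \<ge> 2"

definition toughness :: "'a set \<Rightarrow> ('a \<Rightarrow> 'a \<Rightarrow> bool) \<Rightarrow> real" where
  "toughness V E = Inf {real (card S) / real (num_components V E S) | S. vertex_cut V E S}"

definition independent_set :: "'a set \<Rightarrow> ('a \<Rightarrow> 'a \<Rightarrow> bool) \<Rightarrow> 'a set \<Rightarrow> bool" where
  "independent_set V E I \<longleftrightarrow> I \<subseteq> V \<and> (\<forall>x\<in>I. \<forall>y\<in>I. \<not> E x y)"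

definition maximum_independent_set :: "'a set \<Rightarrow> ('a \<Rightarrow> 'a \<Rightarrow> bool) \<Rightarrow> 'a set \<Rightarrow> bool" where
  "maximum_independent_set V E I \<longleftrightarrow> independent_set V E I \<and>
     (\<forall>J. independent_set V E J \<longrightarrow> card J \<le> card I)"

end

theory Submission
  imports Defs
begin


lemma cyc3:
  fixes m :: nat and I :: "nat set"
  assumes m: "6 \<le> m" and I: "I \<subseteq> {..<m}"
    and inter: "\<And>i j. i \<in> I \<Longrightarrow> j \<in> I \<Longrightarrow> \<exists>a<3. \<exists>b<3. (i+a) mod m = (j+b) mod m"
  shows "card I \<le> 3"
proof (cases "I = {}")
  case True then show ?thesis by simp
next
  case False
  then obtain i0 where i0: "i0 \<in> I" by auto
  have dv: "\<exists>a<3. \<exists>b<3. int m dvd (int i + int a - int j - int b)" if hi: "i \<in> I" and hj: "j \<in> I" for i j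
  proof -
    obtain a b where ab: "a < 3" "b < 3" "(i+a) mod m = (j+b) mod m" using inter[OF hi hj] by blast
    then have "int (i+a) mod int m = int (j+b) mod int m" by (metis zmod_int)
    then have "int m dvd (int (i+a) - int (j+b))" by (simp add: mod_eq_dvd_iff)
    then show ?thesis using ab by (intro exI[of _ a] conjI exI[of _ b]) (auto simp: algebra_simps)
  qed
  define T where "T j = (int j - int i0 + 2) mod int m - 2" for j
  have F1: "-2 \<le> T j \<and> T j \<le> 2 \<and> int m dvd (int j - int i0 - T j)" if hj: "j \<in> I" for j
  proof -
    obtain a b where ab: "a < 3" "b < 3" "int m dvd (int j + int a - int i0 - int b)"
      using dv[OF hj i0] by blast
    have "(int j - int i0 + 2) mod int m = (int b - int a + 2) mod int m"
      using ab(3) by (simp add: mod_eq_dvd_iff algebra_simps)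
    also have "\<dots> = int b - int a + 2" using ab m by (intro mod_pos_pos_trivial) auto
    finally have Tj: "T j = int b - int a" by (simp add: T_def)
    have e: "int j - int i0 - T j = int j + int a - int i0 - int b" by (simp add: Tj)
    have "int m dvd (int j - int i0 - T j)" by (subst e, rule ab(3))
    then show ?thesis using ab(1,2) Tj by simp
  qed
  have small: "x = 0" if hd: "int m dvd x" and hl: "-int m < x" and hu: "x < int m" for x :: int
  proof -
    obtain k where k: "x = int m * k" using hd by (auto elim: dvdE)
    have "k = 0"
    proof (rule ccontr)
      assume "k \<noteq> 0"
      then have "k \<ge> 1 \<or> k \<le> -1" by auto
      then show False
      proof
        assume "k \<ge> 1"
        then have "int m * 1 \<le> int m * k" by (intro mult_left_mono) auto
        then show False using hl hu k by linarith
      next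
        assume "k \<le> -1"
        then have "int m * k \<le> int m * (-1)" by (intro mult_left_mono) auto
        then show False using hl hu k by linarith
      qed
    qed
    then show ?thesis using k by simp
  qed
  have inj: "inj_on T I"
  proof (rule inj_onI)
    fix j j' assume jj: "j \<in> I" "j' \<in> I" "T j = T j'"
    have "int m dvd ((int j - int i0 - T j) - (int j' - int i0 - T j'))"
      using F1[OF jj(1)] F1[OF jj(2)] dvd_diff by blast
    then have "int m dvd (int j - int j')" using jj(3) by simp
    moreover have "j < m" "j' < m" using I jj by auto
    ultimately have "int j - int j' = 0" by (intro small) auto
    then show "j = j'" by simp
  qed
  have F3: "T j' - T j \<noteq> 3" if hj: "j \<in> I" and hj': "j' \<in> I" for j j'
  proof
    assume h: "T j' - T j = 3"
    obtain a b where ab: "a < 3" "b < 3" "int m dvd (int j + int a - int j' - int b)"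
      using dv[OF hj hj'] by blast
    have "int m dvd ((int j + int a - int j' - int b) - (int j - int i0 - T j) + (int j' - int i0 - T j'))"
      using dvd_add[OF dvd_diff[OF ab(3) conjunct2[OF conjunct2[OF F1[OF hj]]]] conjunct2[OF conjunct2[OF F1[OF hj']]]] .
    then have "int m dvd (int a - int b - 3)" using h by (simp add: algebra_simps)
    then have "int a - int b - 3 = 0" using ab m by (intro small) auto
    then show False using ab by simp
  qed
  define S where "S = T ` I"
  have S1: "S \<subseteq> {-2..2}" using F1 by (auto simp: S_def)
  have S2: "\<not> (1 \<in> S \<and> -2 \<in> S)"
  proof
    assume "1 \<in> S \<and> -2 \<in> S"
    then obtain j j' where "j \<in> I" "j' \<in> I" "T j = -2" "T j' = 1" by (auto simp: S_def)
    then show False using F3 by fastforce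
  qed
  have S3: "\<not> (2 \<in> S \<and> -1 \<in> S)"
  proof
    assume "2 \<in> S \<and> -1 \<in> S"
    then obtain j j' where "j \<in> I" "j' \<in> I" "T j = -1" "T j' = 2" by (auto simp: S_def)
    then show False using F3 by fastforce
  qed
  have "S \<subseteq> {0, if 1 \<in> S then 1 else -2, if 2 \<in> S then 2 else -1}"
  proof
    fix s assume s: "s \<in> S"
    then have "s \<in> {-2..2}" using S1 by auto
    then have "s = -2 \<or> s = -1 \<or> s = 0 \<or> s = 1 \<or> s = 2" by auto
    then show "s \<in> {0, if 1 \<in> S then 1 else -2, if 2 \<in> S then 2 else -1}"
      using s S2 S3 by auto
  qed
  then have "card S \<le> card {0::int, if 1 \<in> S then 1 else -2, if 2 \<in> S then 2 else -1}"
    by (intro card_mono) auto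
  also have "\<dots> \<le> 3" by (rule order_trans[OF card_insert_le_m1]) (auto intro: order_trans[OF card_insert_le_m1])
  finally have "card S \<le> 3" .
  moreover have "card S = card I" using inj by (simp add: S_def card_image)
  ultimately show ?thesis by simp
qed

lemma mod_eq_small:
  fixes x y m :: nat
  assumes "x mod m = y mod m" "x \<le> y" "y < x + m"
  shows "x = y"
proof -
  have "m dvd y - x" using assms(1,2) by (metis mod_eq_dvd_iff_nat)
  moreover have "y - x < m" using assms(2,3) by linarith
  ultimately have "y - x = 0" by (metis dvd_imp_le not_less gr0I)
  then show ?thesis using assms(2) by simp
qed

definition arc :: "'a list \<Rightarrow> nat \<Rightarrow> 'a set" where
  "arc xs i = (\<lambda>a. xs ! ((i + a) mod length xs)) ` {..<3}"

lemma arc_subset: "length xs > 0 \<Longrightarrow> arc xs i \<subseteq> set xs"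
  unfolding arc_def by auto

lemma arc_card:
  assumes "distinct xs" "length xs \<ge> 3"
  shows "card (arc xs i) = 3"
proof -
  let ?m = "length xs"
  have "inj_on (\<lambda>a. xs ! ((i + a) mod ?m)) {..<3}"
  proof (rule inj_onI)
    fix a b assume ab: "a \<in> {..<3}" "b \<in> {..<3}" "xs ! ((i + a) mod ?m) = xs ! ((i + b) mod ?m)"
    have m0: "?m > 0" using assms(2) by linarith
    have e: "(i + a) mod ?m = (i + b) mod ?m"
      using ab(3) nth_eq_iff_index_eq[OF assms(1), of "(i+a) mod ?m" "(i+b) mod ?m"] m0 by simp
    have "b < 3" "a < 3" using ab by auto
    show "a = b"
    proof (cases "a \<le> b")
      case True
      then have "i + a = i + b" using mod_eq_small[OF e] \<open>b < 3\<close> assms(2) by simp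
      then show ?thesis by simp
    next
      case False
      then have "i + b = i + a" using mod_eq_small[OF e[symmetric]] \<open>a < 3\<close> assms(2) by simp
      then show ?thesis by simp
    qed
  qed
  then show ?thesis unfolding arc_def by (simp add: card_image)
qed

lemma arc_inter:
  assumes "distinct xs" "length xs = m" "0 < m" "i < m" "j < m" "arc xs i \<inter> arc xs j \<noteq> {}"
  shows "\<exists>a<3. \<exists>b<3. (i+a) mod m = (j+b) mod m"
proof -
  obtain a b where ab: "a < 3" "b < 3" "xs ! ((i + a) mod m) = xs ! ((j + b) mod m)"
    using assms(6) unfolding arc_def assms(2) by auto
  then have "(i + a) mod m = (j + b) mod m"
    using assms by (simp add: nth_eq_iff_index_eq)
  then show ?thesis using ab by blast
qed

lemma per_list:
  assumes "distinct xs" "length xs = m" "6 \<le> m"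
    and F: "\<forall>A\<in>F. \<forall>B\<in>F. A \<inter> B \<noteq> {}"
  shows "card {i. i < m \<and> arc xs i \<in> F} \<le> 3"
proof (rule cyc3[OF assms(3)])
  show "{i. i < m \<and> arc xs i \<in> F} \<subseteq> {..<m}" by auto
  fix i j assume "i \<in> {i. i < m \<and> arc xs i \<in> F}" "j \<in> {i. i < m \<and> arc xs i \<in> F}"
  then show "\<exists>a<3. \<exists>b<3. (i + a) mod m = (j + b) mod m"
    using assms F by (intro arc_inter[of xs]) auto
qed

lemma perm_exists:
  assumes "finite X" "f \<subseteq> X" "f' \<subseteq> X" "card f = card f'"
  shows "\<exists>\<rho>. bij_betw \<rho> X X \<and> \<rho> ` f = f'"
proof -
  have fin: "finite f" "finite f'" using assms finite_subset by auto
  obtain g where g: "bij_betw g f f'" using finite_same_card_bij[OF fin assms(4)] by blast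
  have "card (X - f) = card (X - f')"
    using assms fin by (simp add: card_Diff_subset)
  then obtain h where h: "bij_betw h (X - f) (X - f')"
    using finite_same_card_bij assms(1) by blast
  have "bij_betw (\<lambda>x. if x \<in> f then g x else h x) (f \<union> (X - f)) (f' \<union> (X - f'))"
    by (rule bij_betw_disjoint_Un[OF g h]) auto
  moreover have "f \<union> (X - f) = X" "f' \<union> (X - f') = X" using assms by auto
  moreover have "(\<lambda>x. if x \<in> f then g x else h x) ` f = f'"
    using g by (auto simp: bij_betw_def)
  ultimately show ?thesis by metis
qed

lemma ekr3:
  assumes X: "finite X" "6 \<le> card X"
    and Fs: "F \<subseteq> {A. A \<subseteq> X \<and> card A = 3}"
    and Fi: "\<forall>A\<in>F. \<forall>B\<in>F. A \<inter> B \<noteq> {}"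
  shows "card F \<le> (card X - 1) choose 2"
proof -
  define m where "m = card X"
  have m6: "6 \<le> m" using X m_def by simp
  define Ps where "Ps = {xs. set xs = X \<and> distinct xs}"
  have lenPs: "length xs = m" if "xs \<in> Ps" for xs
    using that distinct_card[of xs] by (auto simp: Ps_def m_def)
  have finPs: "finite Ps"
  proof (rule finite_subset[OF _ finite_lists_length_eq[OF X(1), of m]])
    show "Ps \<subseteq> {xs. set xs \<subseteq> X \<and> length xs = m}" using lenPs by (auto simp: Ps_def)
  qed
  have Psne: "Ps \<noteq> {}" using finite_distinct_list[OF X(1)] by (auto simp: Ps_def)
  define P where "P = Ps \<times> {..<m}"
  have finP: "finite P" using finPs by (simp add: P_def)
  define g where "g p = arc (fst p) (snd p)" for p :: "'a list \<times> nat"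
  define T3 where "T3 = {A. A \<subseteq> X \<and> card A = 3}"
  have finT3: "finite T3" unfolding T3_def using X(1) by (rule finite_subset[rotated, OF finite_Pow_iff[THEN iffD2]]) auto
  have cardT3: "card T3 = m choose 3" unfolding T3_def m_def using n_subsets[OF X(1)] by simp
  have gT3: "g p \<in> T3" if hp: "p \<in> P" for p
  proof -
    obtain xs i where p: "p = (xs, i)" "xs \<in> Ps" "i < m" using hp by (auto simp: P_def)
    have lx: "length xs = m" using lenPs p(2) by simp
    have sx: "set xs = X" "distinct xs" using p(2) by (auto simp: Ps_def)
    have "arc xs i \<subseteq> X" using arc_subset[of xs i] lx m6 sx by auto
    moreover have "card (arc xs i) = 3" using arc_card[of xs i] lx m6 sx by auto
    ultimately show ?thesis using p by (simp add: g_def T3_def)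
  qed
  define c where "c f = card {p \<in> P. g p = f}" for f
  have sumfib: "card {p \<in> P. g p \<in> G} = (\<Sum>f\<in>G. c f)" if "finite G" for G
  proof -
    have "{p \<in> P. g p \<in> G} = (\<Union>f\<in>G. {p \<in> P. g p = f})" by auto
    then have "card {p \<in> P. g p \<in> G} = card (\<Union>f\<in>G. {p \<in> P. g p = f})" by simp
    also have "\<dots> = (\<Sum>f\<in>G. card {p \<in> P. g p = f})"
      by (rule card_UN_disjoint) (use that finP in auto)
    finally show ?thesis by (simp add: c_def)
  qed
  have cmono: "c f \<le> c f'" if hf: "f \<in> T3" and hf': "f' \<in> T3" for f f'
  proof -
    obtain \<rho> where rho: "bij_betw \<rho> X X" "\<rho> ` f = f'"
      using perm_exists[OF X(1), of f f'] hf hf' by (auto simp: T3_def)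
    have injr: "inj_on \<rho> X" using rho(1) by (simp add: bij_betw_def)
    define h where "h p = (map \<rho> (fst p), snd p)" for p :: "'a list \<times> nat"
    have "inj_on h {p \<in> P. g p = f}"
    proof (rule inj_onI)
      fix p q assume pq: "p \<in> {p \<in> P. g p = f}" "q \<in> {p \<in> P. g p = f}" "h p = h q"
      have "set (fst p) = X" "set (fst q) = X" using pq by (auto simp: P_def Ps_def)
      then have "fst p = fst q" using pq(3) injr
        by (metis (no_types, lifting) Un_absorb fst_conv h_def inj_on_map_eq_map)
      moreover have "snd p = snd q" using pq(3) by (simp add: h_def)
      ultimately show "p = q" by (simp add: prod_eq_iff)
    qed
    moreover have "h ` {p \<in> P. g p = f} \<subseteq> {p \<in> P. g p = f'}"
    proof
      fix q assume "q \<in> h ` {p \<in> P. g p = f}"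
      then obtain xs i where xi: "xs \<in> Ps" "i < m" "arc xs i = f" "q = (map \<rho> xs, i)"
        by (auto simp: h_def P_def g_def)
      have sx: "set xs = X" "distinct xs" using xi(1) by (auto simp: Ps_def)
      have "map \<rho> xs \<in> Ps" using sx rho(1) injr
        by (auto simp: Ps_def distinct_map bij_betw_def)
      moreover have "arc (map \<rho> xs) i = \<rho> ` arc xs i"
      proof -
        have lm: "length xs = m" using lenPs xi(1) by simp
        have "arc (map \<rho> xs) i = (\<lambda>a. map \<rho> xs ! ((i + a) mod m)) ` {..<3}"
          by (simp add: arc_def lm)
        also have "\<dots> = (\<lambda>a. \<rho> (xs ! ((i + a) mod m))) ` {..<3}"
          using lm m6 by (intro image_cong) auto
        also have "\<dots> = \<rho> ` arc xs i" by (simp add: arc_def lm image_image)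
        finally show ?thesis .
      qed
      ultimately show "q \<in> {p \<in> P. g p = f'}"
        using xi rho(2) by (auto simp: P_def g_def)
    qed
    moreover have "finite {p \<in> P. g p = f'}" using finP by simp
    ultimately show ?thesis unfolding c_def by (rule card_inj_on_le)
  qed
  have T3ne: "T3 \<noteq> {}"
  proof
    assume "T3 = {}"
    then have "m choose 3 = 0" using cardT3 by simp
    then show False using m6 by simp
  qed
  then obtain f0 where f0: "f0 \<in> T3" by auto
  have call: "c f = c f0" if "f \<in> T3" for f using cmono[OF that f0] cmono[OF f0 that] by simp
  have "card P = (\<Sum>f\<in>T3. c f)"
  proof -
    have "{p \<in> P. g p \<in> T3} = P" using gT3 by auto
    then show ?thesis using sumfib[OF finT3] by simp
  qed
  also have "\<dots> = (m choose 3) * c f0" using call cardT3 by simp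
  finally have eq1: "card Ps * m = (m choose 3) * c f0" by (simp add: P_def card_cartesian_product)
  have finF: "finite F" using Fs finT3 unfolding T3_def by (rule finite_subset)
  have "(\<Sum>f\<in>F. c f) = (\<Sum>f\<in>F. c f0)" using call Fs by (intro sum.cong) (auto simp: T3_def)
  then have "card F * c f0 = (\<Sum>f\<in>F. c f)" by simp
  also have "\<dots> = card {p \<in> P. g p \<in> F}" using sumfib[OF finF] by simp
  also have "{p \<in> P. g p \<in> F} = Sigma Ps (\<lambda>xs. {i. i < m \<and> arc xs i \<in> F})"
    by (auto simp: P_def g_def)
  also have "card \<dots> = (\<Sum>xs\<in>Ps. card {i. i < m \<and> arc xs i \<in> F})"
    using finPs by (intro card_SigmaI) auto
  also have "\<dots> \<le> (\<Sum>xs\<in>Ps. 3)"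
    by (intro sum_mono per_list[OF _ _ m6 Fi]) (auto simp: Ps_def lenPs)
  finally have ineq: "card F * c f0 \<le> 3 * card Ps" by simp
  have "card Ps * (card F * m) = card F * ((m choose 3) * c f0)" using eq1 by (simp add: ac_simps)
  also have "\<dots> = (card F * c f0) * (m choose 3)" by (simp add: ac_simps)
  also have "\<dots> \<le> (3 * card Ps) * (m choose 3)" using ineq by (rule mult_right_mono) simp
  finally have "card Ps * (card F * m) \<le> card Ps * (3 * (m choose 3))" by (simp add: ac_simps)
  moreover have "card Ps > 0" using finPs Psne by (simp add: card_gt_0_iff)
  ultimately have "card F * m \<le> 3 * (m choose 3)" by simp
  also have "3 * (m choose 3) = m * ((m - 1) choose 2)"
    using Suc_times_binomial_eq[of "m - 1" 2] m6 by (simp add: ac_simps)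
  finally have "m * card F \<le> m * ((m - 1) choose 2)" by (simp add: ac_simps)
  then show ?thesis using m6 by (simp add: m_def)
qed



lemma ggl:
  fixes U :: "'a set" and Rel :: "'a \<Rightarrow> 'a \<Rightarrow> bool"
  assumes finU: "finite U" and FU: "F \<subseteq> U"
    and sym: "\<And>u v. Rel u v \<Longrightarrow> Rel v u"
    and deq: "\<And>u v. u \<in> U \<Longrightarrow> v \<in> U \<Longrightarrow> Rel u v \<Longrightarrow> card {w\<in>U. Rel u w} = card {w\<in>U. Rel v w}"
    and pos: "\<And>u. u \<in> F \<Longrightarrow> card {w\<in>U. Rel u w} > 0"
  shows "card F \<le> card {v\<in>U. \<exists>f\<in>F. Rel f v}"
proof -
  define deg where "deg u = real (card {w\<in>U. Rel u w})" for u
  define N where "N = {v\<in>U. \<exists>f\<in>F. Rel f v}"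
  have finF: "finite F" using finU FU finite_subset by blast
  have finN: "finite N" using finU by (simp add: N_def)
  have "real (card F) = (\<Sum>f\<in>F. 1)" by simp
  also have "\<dots> = (\<Sum>f\<in>F. \<Sum>v\<in>{v\<in>N. Rel f v}. 1 / deg v)"
  proof (rule sum.cong[OF refl])
    fix f assume f: "f \<in> F"
    have e: "{v\<in>N. Rel f v} = {w\<in>U. Rel f w}" using f by (auto simp: N_def)
    have "(\<Sum>v\<in>{v\<in>N. Rel f v}. 1 / deg v) = (\<Sum>v\<in>{w\<in>U. Rel f w}. 1 / deg f)"
      unfolding e using f FU by (intro sum.cong[OF refl]) (auto simp: deg_def deq)
    also have "\<dots> = 1" using pos[OF f] by (simp add: deg_def)
    finally show "1 = (\<Sum>v\<in>{v\<in>N. Rel f v}. 1 / deg v)" by simp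
  qed
  also have "\<dots> = (\<Sum>v\<in>N. \<Sum>f\<in>{f\<in>F. Rel f v}. 1 / deg v)"
    by (rule sum.swap_restrict[OF finF finN])
  also have "\<dots> \<le> (\<Sum>v\<in>N. \<Sum>f\<in>{w\<in>U. Rel v w}. 1 / deg v)"
  proof (rule sum_mono)
    fix v assume "v \<in> N"
    show "(\<Sum>f\<in>{f\<in>F. Rel f v}. 1 / deg v) \<le> (\<Sum>f\<in>{w\<in>U. Rel v w}. 1 / deg v)"
      using FU sym finU by (intro sum_mono2) (auto simp: deg_def)
  qed
  also have "\<dots> = (\<Sum>v\<in>N. 1)"
  proof (rule sum.cong[OF refl])
    fix v assume v: "v \<in> N"
    then obtain f where "f \<in> F" "Rel f v" "v \<in> U" by (auto simp: N_def)
    then have "card {w\<in>U. Rel v w} > 0" using FU sym finU by (subst card_gt_0_iff) auto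
    then show "(\<Sum>f\<in>{w\<in>U. Rel v w}. 1 / deg v) = 1" by (simp add: deg_def)
  qed
  also have "\<dots> = real (card N)" by simp
  finally show ?thesis by (simp add: N_def)
qed

lemma count_split:
  assumes fin: "finite P" "finite Q" and disj: "P \<inter> Q = {}" and j: "j \<le> 3"
  shows "card {v. v \<subseteq> P \<union> Q \<and> card v = 3 \<and> card (v \<inter> Q) = j}
       = (card P choose (3 - j)) * (card Q choose j)"
proof -
  define SA where "SA = {A. A \<subseteq> P \<and> card A = 3 - j}"
  define SB where "SB = {B. B \<subseteq> Q \<and> card B = j}"
  have inj: "inj_on (\<lambda>(A,B). A \<union> B) (SA \<times> SB)"
  proof (rule inj_onI)
    fix p q assume h0: "p \<in> SA \<times> SB" "q \<in> SA \<times> SB" "(\<lambda>(A,B). A \<union> B) p = (\<lambda>(A,B). A \<union> B) q"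
    obtain A B A' B' where pq: "p = (A, B)" "q = (A', B')" by (cases p, cases q) auto
    have h: "(A, B) \<in> SA \<times> SB" "(A', B') \<in> SA \<times> SB" "A \<union> B = A' \<union> B'" using h0 pq by auto
    have "A = (A \<union> B) \<inter> P" "A' = (A' \<union> B') \<inter> P" "B = (A \<union> B) \<inter> Q" "B' = (A' \<union> B') \<inter> Q"
      using h(1,2) disj by (auto simp: SA_def SB_def)
    then show "p = q" using h(3) pq by metis
  qed
  have img: "(\<lambda>(A,B). A \<union> B) ` (SA \<times> SB) = {v. v \<subseteq> P \<union> Q \<and> card v = 3 \<and> card (v \<inter> Q) = j}"
  proof (rule set_eqI, rule iffI)
    fix v assume "v \<in> (\<lambda>(A,B). A \<union> B) ` (SA \<times> SB)"
    then obtain A B where AB: "A \<subseteq> P" "card A = 3 - j" "B \<subseteq> Q" "card B = j" "v = A \<union> B"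
      by (auto simp: SA_def SB_def)
    have fAB: "finite A" "finite B" using AB fin finite_subset by auto
    have "A \<inter> B = {}" using AB disj by auto
    then have "card v = 3" using AB fAB j by (simp add: card_Un_disjoint)
    moreover have "v \<inter> Q = B" using AB disj by auto
    ultimately show "v \<in> {v. v \<subseteq> P \<union> Q \<and> card v = 3 \<and> card (v \<inter> Q) = j}" using AB by auto
  next
    fix v assume v: "v \<in> {v. v \<subseteq> P \<union> Q \<and> card v = 3 \<and> card (v \<inter> Q) = j}"
    have fv: "finite v" using v fin finite_subset by (metis (no_types, lifting) finite_UnI mem_Collect_eq)
    have vv: "v = (v \<inter> P) \<union> (v \<inter> Q)" using v by auto
    have "card v = card (v \<inter> P) + card (v \<inter> Q)"
      using fv disj by (subst vv, subst card_Un_disjoint) auto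
    then have "card (v \<inter> P) = 3 - j" using v by auto
    then have "(v \<inter> P, v \<inter> Q) \<in> SA \<times> SB" using v by (auto simp: SA_def SB_def)
    moreover have "v = (\<lambda>(A,B). A \<union> B) (v \<inter> P, v \<inter> Q)" using vv by simp
    ultimately show "v \<in> (\<lambda>(A,B). A \<union> B) ` (SA \<times> SB)" by (rule rev_image_eqI)
  qed
  have "card {v. v \<subseteq> P \<union> Q \<and> card v = 3 \<and> card (v \<inter> Q) = j} = card (SA \<times> SB)"
    using img card_image[OF inj] by simp
  also have "\<dots> = card SA * card SB" by (simp add: card_cartesian_product)
  also have "\<dots> = (card P choose (3 - j)) * (card Q choose j)"
    using n_subsets[OF fin(1)] n_subsets[OF fin(2)] by (simp add: SA_def SB_def)
  finally show ?thesis .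
qed



abbreviation KV :: "nat \<Rightarrow> nat set set" where "KV n \<equiv> kneser_vertices n 3"

lemma KV_iff: "A \<in> KV n \<longleftrightarrow> A \<subseteq> {1..n} \<and> card A = 3"
  by (simp add: kneser_vertices_def)

lemma KV_finite_elem: "A \<in> KV n \<Longrightarrow> finite A"
  by (auto simp: KV_iff intro: finite_subset)

lemma finite_KV: "finite (KV n)"
  unfolding kneser_vertices_def by (rule finite_subset[of _ "Pow {1..n}"]) auto

lemma card_KV: "card (KV n) = n choose 3"
  unfolding kneser_vertices_def using n_subsets[of "{1..n}" 3] by simp

lemma card_Nb:
  assumes "x \<in> KV n"
  shows "card {v\<in>KV n. v \<inter> x = {}} = (n - 3) choose 3"
proof -
  have "{v\<in>KV n. v \<inter> x = {}} = {v. v \<subseteq> {1..n} - x \<and> card v = 3}"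
    by (auto simp: KV_iff)
  moreover have "card ({1..n} - x) = n - 3"
  proof -
    have "x \<subseteq> {1..n}" "card x = 3" using assms by (auto simp: KV_iff)
    moreover have "finite x" using KV_finite_elem assms by blast
    ultimately show ?thesis by (simp add: card_Diff_subset)
  qed
  ultimately show ?thesis using n_subsets[of "{1..n} - x" 3] by simp
qed

lemma deg_formula:
  assumes n: "9 \<le> n" and x: "x \<in> KV n" and y: "y \<in> KV n" and xy: "x \<inter> y \<noteq> {}"
    and u: "u \<in> KV n" "u \<inter> x = {}" "u \<inter> y \<noteq> {}"
  defines "Z \<equiv> {1..n} - x - y"
  shows "card {w\<in>KV n. w \<inter> y = {} \<and> w \<inter> x \<noteq> {} \<and> w \<inter> u = {} \<and> card (w \<inter> Z) = card (u \<inter> Z)}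
       = (card (x - y) choose (3 - card (u \<inter> Z))) * ((card Z - card (u \<inter> Z)) choose card (u \<inter> Z))"
    and "0 < (card (x - y) choose (3 - card (u \<inter> Z))) * ((card Z - card (u \<inter> Z)) choose card (u \<inter> Z))"
proof -
  define j where "j = card (u \<inter> Z)"
  have finx: "finite x" "finite y" "finite u" using x y u KV_finite_elem by auto
  have finZ: "finite Z" by (simp add: Z_def)
  have u3: "card u = 3" "u \<subseteq> {1..n}" using u by (auto simp: KV_iff)
  obtain e where e: "e \<in> u" "e \<in> y" using u(3) by auto
  have "e \<notin> x" using e u(2) by auto
  have "u \<inter> Z \<subset> u" using e by (auto simp: Z_def)
  then have "card (u \<inter> Z) < card u" using finx by (intro psubset_card_mono) auto
  then have j2: "j \<le> 2" using u3 unfolding j_def by simp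
  have cardxy: "card (x - y) = card (y - x)"
  proof -
    have "card (x - y) = card x - card (x \<inter> y)" using finx by (intro card_Diff_subset_Int) simp
    moreover have "card (y - x) = card y - card (y \<inter> x)" using finx by (intro card_Diff_subset_Int) simp
    moreover have "y \<inter> x = x \<inter> y" by blast
    moreover have "card x = 3" "card y = 3" using x y by (simp_all add: KV_iff)
    ultimately show ?thesis by simp
  qed
  have "u \<subseteq> (y - x) \<union> (u \<inter> Z)" using u3 u(2) by (auto simp: Z_def)
  then have "card u \<le> card ((y - x) \<union> (u \<inter> Z))" using finx finZ by (intro card_mono) auto
  also have "\<dots> \<le> card (y - x) + j" unfolding j_def by (rule card_Un_le)
  finally have p1: "3 - j \<le> card (x - y)" using u3 cardxy by linarith
  have "card (x \<union> y) \<le> 5"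
  proof -
    have "card x + card y = card (x \<union> y) + card (x \<inter> y)" using finx by (intro card_Un_Int) auto
    moreover have "card (x \<inter> y) \<ge> 1" using xy finx by (simp add: Suc_le_eq card_gt_0_iff)
    moreover have "card x = 3" "card y = 3" using x y by (simp_all add: KV_iff)
    ultimately show ?thesis by linarith
  qed
  moreover have "Z = {1..n} - (x \<union> y)" by (auto simp: Z_def)
  moreover have "x \<union> y \<subseteq> {1..n}" using x y by (auto simp: KV_iff)
  ultimately have cZ: "card Z \<ge> n - 5" using finx by (simp add: card_Diff_subset)
  have cZu: "card (Z - u) = card Z - j"
  proof -
    have "card (Z - u) = card Z - card (Z \<inter> u)" using finZ by (intro card_Diff_subset_Int) simp
    moreover have "Z \<inter> u = u \<inter> Z" by blast
    ultimately show ?thesis by (simp add: j_def)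
  qed
  have set_eq: "{w\<in>KV n. w \<inter> y = {} \<and> w \<inter> x \<noteq> {} \<and> w \<inter> u = {} \<and> card (w \<inter> Z) = j}
     = {w. w \<subseteq> (x - y) \<union> (Z - u) \<and> card w = 3 \<and> card (w \<inter> (Z - u)) = j}"
  proof (rule set_eqI, rule iffI)
    fix w assume w: "w \<in> {w\<in>KV n. w \<inter> y = {} \<and> w \<inter> x \<noteq> {} \<and> w \<inter> u = {} \<and> card (w \<inter> Z) = j}"
    have w1: "w \<subseteq> {1..n}" "card w = 3" "w \<inter> y = {}" "w \<inter> u = {}" "card (w \<inter> Z) = j"
      using w by (simp_all add: KV_iff)
    have "w \<subseteq> (x - y) \<union> (Z - u)" using w1(1,3,4) unfolding Z_def by blast
    moreover have "w \<inter> (Z - u) = w \<inter> Z" using w1(4) by blast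
    ultimately show "w \<in> {w. w \<subseteq> (x - y) \<union> (Z - u) \<and> card w = 3 \<and> card (w \<inter> (Z - u)) = j}"
      using w1 by simp
  next
    fix w assume w: "w \<in> {w. w \<subseteq> (x - y) \<union> (Z - u) \<and> card w = 3 \<and> card (w \<inter> (Z - u)) = j}"
    have w1: "w \<subseteq> (x - y) \<union> (Z - u)" "card w = 3" "card (w \<inter> (Z - u)) = j" using w by simp_all
    have "x \<subseteq> {1..n}" using x by (simp add: KV_iff)
    then have "w \<subseteq> {1..n}" using w1(1) unfolding Z_def by blast
    moreover have "w \<inter> y = {}" using w1(1) unfolding Z_def by blast
    moreover have wu: "w \<inter> u = {}" using w1(1) u(2) by blast
    moreover have "w \<inter> x \<noteq> {}"
    proof
      assume "w \<inter> x = {}"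
      then have "w \<inter> (Z - u) = w" using w1(1) by blast
      then show False using w1 j2 by simp
    qed
    moreover have "w \<inter> (Z - u) = w \<inter> Z" using wu by blast
    ultimately show "w \<in> {w\<in>KV n. w \<inter> y = {} \<and> w \<inter> x \<noteq> {} \<and> w \<inter> u = {} \<and> card (w \<inter> Z) = j}"
      using w1 by (simp add: KV_iff)
  qed
  have "card {w. w \<subseteq> (x - y) \<union> (Z - u) \<and> card w = 3 \<and> card (w \<inter> (Z - u)) = j}
      = (card (x - y) choose (3 - j)) * (card (Z - u) choose j)"
    using finx finZ j2 by (intro count_split) (auto simp: Z_def)
  then show "card {w\<in>KV n. w \<inter> y = {} \<and> w \<inter> x \<noteq> {} \<and> w \<inter> u = {} \<and> card (w \<inter> Z) = card (u \<inter> Z)}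
       = (card (x - y) choose (3 - card (u \<inter> Z))) * ((card Z - card (u \<inter> Z)) choose card (u \<inter> Z))"
    unfolding j_def[symmetric] cZu[symmetric] set_eq .
  have "0 < card (x - y) choose (3 - j)" using p1 by (rule zero_less_binomial)
  moreover have "0 < (card Z - j) choose j" using j2 cZ n by (intro zero_less_binomial) linarith
  ultimately show "0 < (card (x - y) choose (3 - card (u \<inter> Z))) * ((card Z - card (u \<inter> Z)) choose card (u \<inter> Z))"
    unfolding j_def[symmetric] by simp
qed

lemma block_bound:
  assumes n: "9 \<le> n" and CV: "C \<subseteq> KV n" and RV: "R \<subseteq> KV n" and xC: "x \<in> C" and yR: "y \<in> R"
    and cross: "\<And>c r. c \<in> C \<Longrightarrow> r \<in> R \<Longrightarrow> c \<inter> r \<noteq> {}"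
  defines "Lx \<equiv> {v\<in>KV n. v \<inter> x = {}} - {v\<in>KV n. v \<inter> y = {}}"
    and "Ry \<equiv> {v\<in>KV n. v \<inter> y = {}} - {v\<in>KV n. v \<inter> x = {}}"
  shows "card (C \<inter> Lx) + card (R \<inter> Ry) \<le> card Ry"
proof -
  have x: "x \<in> KV n" and y: "y \<in> KV n" using xC yR CV RV by auto
  have xy: "x \<inter> y \<noteq> {}" using cross xC yR by blast
  define Z where "Z = {1..n} - x - y"
  define U where "U = Lx \<union> Ry"
  define Rel where "Rel u v \<longleftrightarrow> u \<inter> v = {} \<and> ((u \<in> Lx \<and> v \<in> Ry) \<or> (u \<in> Ry \<and> v \<in> Lx))
      \<and> card (u \<inter> Z) = card (v \<inter> Z)" for u v
  define D where "D j = (card (x - y) choose (3 - j)) * ((card Z - j) choose j)" for j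
  have finU: "finite U" unfolding U_def Lx_def Ry_def using finite_KV by auto
  have cardxy: "card (x - y) = card (y - x)"
  proof -
    have fx: "finite x" "finite y" using x y KV_finite_elem by auto
    have "card (x - y) = card x - card (x \<inter> y)" using fx by (intro card_Diff_subset_Int) simp
    moreover have "card (y - x) = card y - card (y \<inter> x)" using fx by (intro card_Diff_subset_Int) simp
    moreover have "y \<inter> x = x \<inter> y" by blast
    moreover have "card x = 3" "card y = 3" using x y by (simp_all add: KV_iff)
    ultimately show ?thesis by simp
  qed
  have ZZ: "{1..n} - y - x = Z" by (auto simp: Z_def)
  have degL: "card {w\<in>U. Rel u w} = D (card (u \<inter> Z)) \<and> 0 < D (card (u \<inter> Z))" if u: "u \<in> Lx" for u
  proof -
    have u': "u \<in> KV n" "u \<inter> x = {}" "u \<inter> y \<noteq> {}" using u by (auto simp: Lx_def)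
    have uR: "u \<notin> Ry" using u' by (simp add: Ry_def)
    have "{w\<in>U. Rel u w} = {w\<in>KV n. w \<inter> y = {} \<and> w \<inter> x \<noteq> {} \<and> w \<inter> u = {} \<and> card (w \<inter> Z) = card (u \<inter> Z)}"
    proof (rule set_eqI)
      fix w
      have "w \<in> U \<and> Rel u w \<longleftrightarrow> w \<in> Ry \<and> u \<inter> w = {} \<and> card (u \<inter> Z) = card (w \<inter> Z)"
        using u uR unfolding Rel_def U_def by blast
      also have "\<dots> \<longleftrightarrow> w \<in> KV n \<and> w \<inter> y = {} \<and> w \<inter> x \<noteq> {} \<and> w \<inter> u = {} \<and> card (w \<inter> Z) = card (u \<inter> Z)"
        unfolding Ry_def by (auto simp: inf_commute)
      finally show "w \<in> {w\<in>U. Rel u w} \<longleftrightarrow> w \<in> {w\<in>KV n. w \<inter> y = {} \<and> w \<inter> x \<noteq> {} \<and> w \<inter> u = {} \<and> card (w \<inter> Z) = card (u \<inter> Z)}"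
        by simp
    qed
    then show ?thesis using deg_formula[OF n x y xy u'] unfolding D_def Z_def by simp
  qed
  have degR: "card {w\<in>U. Rel v w} = D (card (v \<inter> Z))" if v: "v \<in> Ry" for v
  proof -
    have v': "v \<in> KV n" "v \<inter> y = {}" "v \<inter> x \<noteq> {}" using v by (auto simp: Ry_def)
    have yx: "y \<inter> x \<noteq> {}" using xy by blast
    have vL: "v \<notin> Lx" using v' by (simp add: Lx_def)
    have "{w\<in>U. Rel v w} = {w\<in>KV n. w \<inter> x = {} \<and> w \<inter> y \<noteq> {} \<and> w \<inter> v = {} \<and> card (w \<inter> Z) = card (v \<inter> Z)}"
    proof (rule set_eqI)
      fix w
      have "w \<in> U \<and> Rel v w \<longleftrightarrow> w \<in> Lx \<and> v \<inter> w = {} \<and> card (v \<inter> Z) = card (w \<inter> Z)"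
        using v vL unfolding Rel_def U_def by blast
      also have "\<dots> \<longleftrightarrow> w \<in> KV n \<and> w \<inter> x = {} \<and> w \<inter> y \<noteq> {} \<and> w \<inter> v = {} \<and> card (w \<inter> Z) = card (v \<inter> Z)"
        unfolding Lx_def by (auto simp: inf_commute)
      finally show "w \<in> {w\<in>U. Rel v w} \<longleftrightarrow> w \<in> {w\<in>KV n. w \<inter> x = {} \<and> w \<inter> y \<noteq> {} \<and> w \<inter> v = {} \<and> card (w \<inter> Z) = card (v \<inter> Z)}"
        by simp
    qed
    then show ?thesis using deg_formula(1)[OF n y x yx v'] cardxy unfolding D_def ZZ by simp
  qed
  have deg: "card {w\<in>U. Rel u w} = D (card (u \<inter> Z))" if "u \<in> U" for u
    using that degL degR by (auto simp: U_def)
  define F where "F = C \<inter> Lx"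
  define NF where "NF = {v\<in>U. \<exists>f\<in>F. Rel f v}"
  have "card F \<le> card NF" unfolding NF_def
  proof (rule ggl[OF finU])
    show "F \<subseteq> U" by (auto simp: F_def U_def)
    show "\<And>u v. Rel u v \<Longrightarrow> Rel v u" by (auto simp: Rel_def)
    fix u v assume uv: "u \<in> U" "v \<in> U" "Rel u v"
    then have "card (u \<inter> Z) = card (v \<inter> Z)" by (simp add: Rel_def)
    then show "card {w\<in>U. Rel u w} = card {w\<in>U. Rel v w}" using deg[OF uv(1)] deg[OF uv(2)] by simp
  next
    show "\<And>u. u \<in> F \<Longrightarrow> 0 < card {w\<in>U. Rel u w}" using degL by (auto simp: F_def)
  qed
  moreover have NFsub: "NF \<subseteq> Ry - R"
  proof
    fix v assume "v \<in> NF"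
    then obtain f where f: "f \<in> F" "Rel f v" "v \<in> U" by (auto simp: NF_def)
    have "f \<in> Lx" "f \<in> C" using f(1) by (auto simp: F_def)
    moreover have "f \<notin> Ry" using \<open>f \<in> Lx\<close> by (auto simp: Lx_def Ry_def)
    ultimately have "v \<in> Ry" "f \<inter> v = {}" using f(2) by (auto simp: Rel_def)
    moreover have "v \<notin> R" using cross \<open>f \<in> C\<close> \<open>f \<inter> v = {}\<close> by blast
    ultimately show "v \<in> Ry - R" by simp
  qed
  moreover have finRy: "finite Ry" unfolding Ry_def using finite_KV by auto
  moreover have "R \<inter> Ry \<subseteq> Ry - NF" using NFsub by blast
  then have "card (R \<inter> Ry) \<le> card (Ry - NF)" using finRy by (intro card_mono) auto
  moreover have "card (Ry - NF) = card Ry - card NF" using NFsub finRy by (intro card_Diff_subset) (auto intro: finite_subset)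
  moreover have "card NF \<le> card Ry" using NFsub finRy by (intro card_mono) auto
  ultimately show ?thesis unfolding F_def by linarith
qed

lemma L_core:
  assumes n: "9 \<le> n" and CV: "C \<subseteq> KV n" and RV: "R \<subseteq> KV n" and xC: "x \<in> C" and yR: "y \<in> R"
    and disj: "C \<inter> R = {}" and cross: "\<And>c r. c \<in> C \<Longrightarrow> r \<in> R \<Longrightarrow> c \<inter> r \<noteq> {}"
  shows "card C + card R + ((n - 3) choose 3)
    + card ((KV n - {v\<in>KV n. v \<inter> x = {}} - {v\<in>KV n. v \<inter> y = {}} - {x, y}) - (C \<union> R)) \<le> n choose 3"
proof -
  define Nx where "Nx = {v\<in>KV n. v \<inter> x = {}}"
  define Ny where "Ny = {v\<in>KV n. v \<inter> y = {}}"
  define K where "K = KV n - Nx - Ny - {x, y}"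
  define Lx where "Lx = Nx - Ny"
  define Ry where "Ry = Ny - Nx"
  have x: "x \<in> KV n" and y: "y \<in> KV n" using xC yR CV RV by auto
  have xy: "x \<inter> y \<noteq> {}" using cross xC yR by blast
  have xney: "x \<noteq> y" using xC yR disj by blast
  have x0: "x \<inter> x \<noteq> {}" "y \<inter> y \<noteq> {}" using x y by (auto simp: KV_iff)
  have finV: "finite (KV n)" by (rule finite_KV)
  have fins: "finite K" "finite Lx" "finite Ry" "finite Nx" "finite C" "finite R"
    using finV CV RV by (auto simp: K_def Lx_def Ry_def Nx_def Ny_def intro: finite_subset)
  have Csub: "C \<subseteq> (C \<inter> K) \<union> {x} \<union> (C \<inter> Lx)"
  proof
    fix c assume c: "c \<in> C"
    have "c \<notin> Ny" using cross[OF c yR] by (auto simp: Ny_def)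
    moreover have "c \<noteq> y" using c yR disj by blast
    moreover have "c \<in> KV n" using c CV by auto
    ultimately show "c \<in> (C \<inter> K) \<union> {x} \<union> (C \<inter> Lx)" using c by (auto simp: K_def Lx_def)
  qed
  have Rsub: "R \<subseteq> (R \<inter> K) \<union> {y} \<union> (R \<inter> Ry)"
  proof
    fix r assume r: "r \<in> R"
    have "r \<notin> Nx" using cross[OF xC r] by (auto simp: Nx_def)
    moreover have "r \<noteq> x" using r xC disj by blast
    moreover have "r \<in> KV n" using r RV by auto
    ultimately show "r \<in> (R \<inter> K) \<union> {y} \<union> (R \<inter> Ry)" using r by (auto simp: K_def Ry_def)
  qed
  have cC: "card C \<le> card (C \<inter> K) + 1 + card (C \<inter> Lx)"
  proof -
    have "card C \<le> card ((C \<inter> K) \<union> {x} \<union> (C \<inter> Lx))" using Csub fins by (intro card_mono) auto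
    also have "\<dots> \<le> card ((C \<inter> K) \<union> {x}) + card (C \<inter> Lx)" by (rule card_Un_le)
    also have "card ((C \<inter> K) \<union> {x}) \<le> card (C \<inter> K) + card {x}" by (rule card_Un_le)
    finally show ?thesis by simp
  qed
  have cR: "card R \<le> card (R \<inter> K) + 1 + card (R \<inter> Ry)"
  proof -
    have "card R \<le> card ((R \<inter> K) \<union> {y} \<union> (R \<inter> Ry))" using Rsub fins by (intro card_mono) auto
    also have "\<dots> \<le> card ((R \<inter> K) \<union> {y}) + card (R \<inter> Ry)" by (rule card_Un_le)
    also have "card ((R \<inter> K) \<union> {y}) \<le> card (R \<inter> K) + card {y}" by (rule card_Un_le)
    finally show ?thesis by simp
  qed
  have cK: "card (C \<inter> K) + card (R \<inter> K) + card (K - (C \<union> R)) = card K"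
  proof -
    have "card ((C \<inter> K) \<union> (R \<inter> K)) = card (C \<inter> K) + card (R \<inter> K)"
      using fins disj by (intro card_Un_disjoint) auto
    moreover have "card (((C \<inter> K) \<union> (R \<inter> K)) \<union> (K - (C \<union> R))) = card ((C \<inter> K) \<union> (R \<inter> K)) + card (K - (C \<union> R))"
      using fins by (intro card_Un_disjoint) auto
    moreover have "((C \<inter> K) \<union> (R \<inter> K)) \<union> (K - (C \<union> R)) = K" by blast
    ultimately show ?thesis by simp
  qed
  have cB: "card (C \<inter> Lx) + card (R \<inter> Ry) \<le> card Ry"
    using block_bound[OF n CV RV xC yR cross] unfolding Lx_def Ry_def Nx_def Ny_def .
  have cV: "card (KV n) = card K + 2 + card Nx + card Ry"
  proof -
    have "KV n = K \<union> {x, y} \<union> Nx \<union> Ry"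
      using x y by (auto simp: K_def Ry_def Nx_def Ny_def)
    moreover have "card (K \<union> {x, y}) = card K + 2"
      using fins xney by (subst card_Un_disjoint) (auto simp: K_def)
    moreover have "card (K \<union> {x, y} \<union> Nx) = card (K \<union> {x, y}) + card Nx"
      using fins x0 xy by (intro card_Un_disjoint) (auto simp: K_def Nx_def inf_commute)
    moreover have "card (K \<union> {x, y} \<union> Nx \<union> Ry) = card (K \<union> {x, y} \<union> Nx) + card Ry"
      using fins x0 xy by (intro card_Un_disjoint) (auto simp: K_def Nx_def Ry_def Ny_def inf_commute)
    ultimately show ?thesis by simp
  qed
  have cNx: "card Nx = (n - 3) choose 3" unfolding Nx_def by (rule card_Nb[OF x])
  have "card C + card R + card Nx + card (K - (C \<union> R)) \<le> card (KV n)"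
    using cC cR cK cB cV by linarith
  then show ?thesis using cNx card_KV[of n] unfolding K_def Nx_def Ny_def by simp
qed

lemma L_bound:
  assumes n: "9 \<le> n" and CV: "C \<subseteq> KV n" and RV: "R \<subseteq> KV n" and "C \<noteq> {}" "R \<noteq> {}"
    and disj: "C \<inter> R = {}" and cross: "\<And>c r. c \<in> C \<Longrightarrow> r \<in> R \<Longrightarrow> c \<inter> r \<noteq> {}"
  shows "card C + card R + ((n - 3) choose 3) \<le> n choose 3"
proof -
  obtain x y where "x \<in> C" "y \<in> R" using assms by auto
  from L_core[OF n CV RV this disj cross] show ?thesis by linarith
qed

lemma avoid1:
  assumes "finite S" "card S < n"
  shows "\<exists>f. f \<in> {1..n} \<and> f \<notin> S"
proof -
  have "card {1..n} - card S \<le> card ({1..n} - S)" using assms(1) by (rule diff_card_le_card_Diff)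
  then have "card ({1..n} - S) > 0" using assms(2) by simp
  then obtain f where "f \<in> {1..n} - S" by (metis card_gt_0_iff ex_in_conv)
  then show ?thesis by auto
qed

lemma card_le8:
  assumes "A \<in> KV n" "B \<in> KV n" "P \<in> KV n" "Q \<in> KV n" "A \<inter> B = {}"
    and "P \<inter> A \<noteq> {}" "P \<inter> B \<noteq> {}" "Q \<inter> A \<noteq> {}" "Q \<inter> B \<noteq> {}"
  shows "card (A \<union> B \<union> P \<union> Q) \<le> 8"
proof -
  have fin: "finite A" "finite B" "finite P" "finite Q" using assms(1-4) KV_finite_elem by auto
  have c3: "card A = 3" "card B = 3" "card P = 3" "card Q = 3" using assms(1-4) by (auto simp: KV_iff)
  have one: "card (T - (A \<union> B)) \<le> 1" if "T \<in> {P, Q}" for T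
  proof -
    have T: "finite T" "card T = 3" "T \<inter> A \<noteq> {}" "T \<inter> B \<noteq> {}" using that fin c3 assms by auto
    obtain a b where ab: "a \<in> T" "a \<in> A" "b \<in> T" "b \<in> B" using T by blast
    have "a \<noteq> b" using ab assms(5) by blast
    have "T - (A \<union> B) \<subseteq> T - {a, b}" using ab by blast
    then have "card (T - (A \<union> B)) \<le> card (T - {a, b})" using T by (intro card_mono) auto
    also have "card (T - {a, b}) = 1" using T ab \<open>a \<noteq> b\<close> by (simp add: card_Diff_subset)
    finally show ?thesis .
  qed
  have E: "A \<union> B \<union> P \<union> Q = (A \<union> B) \<union> (P - (A \<union> B)) \<union> (Q - (A \<union> B))" by blast
  have "card (A \<union> B \<union> P \<union> Q) = card ((A \<union> B) \<union> (P - (A \<union> B)) \<union> (Q - (A \<union> B)))"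
    using arg_cong[where f=card, OF E] .
  moreover have "card ((A \<union> B) \<union> (P - (A \<union> B)) \<union> (Q - (A \<union> B))) \<le> card ((A \<union> B) \<union> (P - (A \<union> B))) + card (Q - (A \<union> B))"
    by (rule card_Un_le)
  moreover have "card ((A \<union> B) \<union> (P - (A \<union> B))) \<le> card (A \<union> B) + card (P - (A \<union> B))"
    by (rule card_Un_le)
  ultimately have "card (A \<union> B \<union> P \<union> Q) \<le> card (A \<union> B) + card (P - (A \<union> B)) + card (Q - (A \<union> B))"
    by linarith
  moreover have "card (A \<union> B) \<le> 6" using card_Un_le[of A B] c3 by simp
  moreover have "card (P - (A \<union> B)) \<le> 1" "card (Q - (A \<union> B)) \<le> 1" using one by auto
  ultimately show ?thesis by linarith
qed

lemma L_strict:
  assumes n: "9 \<le> n" and CV: "C \<subseteq> KV n" and RV: "R \<subseteq> KV n" and Cne: "C \<noteq> {}"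
    and disj: "C \<inter> R = {}" and cross: "\<And>c r. c \<in> C \<Longrightarrow> r \<in> R \<Longrightarrow> c \<inter> r \<noteq> {}"
    and noiso: "\<And>c. c \<in> C \<Longrightarrow> \<exists>c'\<in>C. c \<inter> c' = {}" and R2: "2 \<le> card R"
  shows "card C + card R + ((n - 3) choose 3) < n choose 3"
proof -
  obtain A where A: "A \<in> C" using Cne by auto
  obtain B where B: "B \<in> C" "A \<inter> B = {}" using noiso[OF A] by auto
  have AV: "A \<in> KV n" "B \<in> KV n" using A B CV by auto
  have finR: "finite R" using RV finite_KV finite_subset by blast
  show ?thesis
  proof (cases "\<exists>P\<in>R. \<exists>Q\<in>R. P \<inter> Q = {}")
    case True
    then obtain P Q where PQ: "P \<in> R" "Q \<in> R" "P \<inter> Q = {}" by auto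
    have PV: "P \<in> KV n" "Q \<in> KV n" using PQ RV by auto
    obtain e where e: "e \<in> A" "e \<in> P" using cross[OF A PQ(1)] by blast
    have "card (A \<union> B \<union> P \<union> Q) \<le> 8"
      using card_le8[OF AV PV B(2)] cross A B PQ by (metis inf_commute)
    then obtain f where f: "f \<in> {1..n}" "f \<notin> A \<union> B \<union> P \<union> Q"
      using avoid1[of "A \<union> B \<union> P \<union> Q" n] n AV PV KV_finite_elem by force
    have "card (B \<union> Q \<union> {e, f}) \<le> 8"
    proof -
      have "card (B \<union> Q \<union> {e, f}) \<le> card (B \<union> Q) + card {e, f}" by (rule card_Un_le)
      moreover have "card (B \<union> Q) \<le> card B + card Q" by (rule card_Un_le)
      moreover have "card {e, f} \<le> 2" by (simp add: card_insert_le_m1)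
      ultimately show ?thesis using AV PV by (simp add: KV_iff)
    qed
    then obtain g where g: "g \<in> {1..n}" "g \<notin> B \<union> Q \<union> {e, f}"
      using avoid1[of "B \<union> Q \<union> {e, f}" n] n AV PV KV_finite_elem by force
    define z where "z = {e, f, g}"
    have ef: "e \<noteq> f" using e f by auto
    have eV: "e \<in> {1..n}" using e AV by (auto simp: KV_iff)
    have zV: "z \<in> KV n" using ef g f eV by (auto simp: z_def KV_iff)
    have zA: "z \<inter> A \<noteq> {}" "z \<inter> P \<noteq> {}" using e by (auto simp: z_def)
    have zne: "z \<noteq> A" "z \<noteq> P" using f by (auto simp: z_def)
    have eB: "e \<notin> B" "e \<notin> Q" using e B(2) PQ(3) by auto
    have zB: "z \<inter> B = {}" "z \<inter> Q = {}" using eB f g by (auto simp: z_def)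
    have znR: "z \<notin> R" using cross[OF B(1)] zB(1) by (metis inf_commute)
    have znC: "z \<notin> C" using cross[OF _ PQ(2)] zB(2) by blast
    have zK: "z \<in> (KV n - {v\<in>KV n. v \<inter> A = {}} - {v\<in>KV n. v \<inter> P = {}} - {A, P}) - (C \<union> R)"
      using zV zA zne znR znC by auto
    then have "card ((KV n - {v\<in>KV n. v \<inter> A = {}} - {v\<in>KV n. v \<inter> P = {}} - {A, P}) - (C \<union> R)) \<ge> 1"
    proof -
      have "finite ((KV n - {v\<in>KV n. v \<inter> A = {}} - {v\<in>KV n. v \<inter> P = {}} - {A, P}) - (C \<union> R))"
        using finite_KV by simp
      then show ?thesis using zK by (simp add: Suc_le_eq card_gt_0_iff) blast
    qed
    then show ?thesis using L_core[OF n CV RV A PQ(1) disj cross] by linarith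
  next
    case False
    then have iso: "\<And>P Q. P \<in> R \<Longrightarrow> Q \<in> R \<Longrightarrow> P \<inter> Q \<noteq> {}" by blast
    obtain y where y: "y \<in> R" using R2 by fastforce
    have "\<exists>r\<in>R. r \<noteq> y"
    proof (rule ccontr)
      assume "\<not> (\<exists>r\<in>R. r \<noteq> y)"
      then have "R \<subseteq> {y}" by auto
      then have "card R \<le> card {y}" by (intro card_mono) auto
      then have "card R \<le> 1" by simp
      then show False using R2 by simp
    qed
    then obtain r where r: "r \<in> R" "r \<noteq> y" by auto
    have yV: "y \<in> KV n" "r \<in> KV n" using y r RV by auto
    have "\<not> y \<subseteq> r"
    proof
      assume "y \<subseteq> r"
      moreover have "card y = card r" "finite r" using yV KV_finite_elem by (auto simp: KV_iff)
      ultimately have "y = r" by (simp add: card_subset_eq)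
      then show False using r by simp
    qed
    then obtain p where p: "p \<in> y" "p \<notin> r" by auto
    obtain A' where A': "A' \<in> C" "p \<notin> A'"
      using A B by (cases "p \<in> A") auto
    have A'V: "A' \<in> KV n" using A' CV by auto
    have c7: "card (A' \<union> r \<union> {p}) \<le> 7"
    proof -
      have "card (A' \<union> r \<union> {p}) \<le> card (A' \<union> r) + card {p}" by (rule card_Un_le)
      moreover have "card (A' \<union> r) \<le> card A' + card r" by (rule card_Un_le)
      ultimately show ?thesis using A'V yV by (simp add: KV_iff)
    qed
    obtain u where u: "u \<in> {1..n}" "u \<notin> A' \<union> r \<union> {p}"
      using avoid1[of "A' \<union> r \<union> {p}" n] c7 n A'V yV KV_finite_elem by force
    have "card (A' \<union> r \<union> {p} \<union> {u}) \<le> 8"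
      using c7 card_Un_le[of "A' \<union> r \<union> {p}" "{u}"] by simp
    then obtain v where v: "v \<in> {1..n}" "v \<notin> A' \<union> r \<union> {p} \<union> {u}"
      using avoid1[of "A' \<union> r \<union> {p} \<union> {u}" n] n A'V yV KV_finite_elem by force
    define z where "z = {p, u, v}"
    have pV: "p \<in> {1..n}" using p yV by (auto simp: KV_iff)
    have zV: "z \<in> KV n" using u v pV by (auto simp: z_def KV_iff)
    have zy: "z \<inter> y \<noteq> {}" using p by (auto simp: z_def)
    have zA': "z \<inter> A' = {}" using A' u v by (auto simp: z_def)
    have zr: "z \<inter> r = {}" using p u v by (auto simp: z_def)
    have znR: "z \<notin> R" using cross[OF A'(1)] zA' by (metis inf_commute)
    have znC: "z \<notin> C" using cross[OF _ r(1)] zr by blast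
    define Ny where "Ny = {v\<in>KV n. v \<inter> y = {}}"
    define D where "D = KV n - C - R"
    have NyD: "Ny \<subseteq> D"
    proof
      fix w assume w: "w \<in> Ny"
      then have "w \<notin> C" using cross[OF _ y] by (auto simp: Ny_def)
      moreover have "w \<notin> R" using iso[OF _ y] w by (auto simp: Ny_def)
      ultimately show "w \<in> D" using w by (auto simp: D_def Ny_def)
    qed
    have zD: "z \<in> D - Ny" using zV zy znR znC by (auto simp: D_def Ny_def)
    have finD: "finite D" using finite_KV by (simp add: D_def)
    have "card (insert z Ny) \<le> card D" using NyD zD finD by (intro card_mono) auto
    moreover have "card (insert z Ny) = card Ny + 1" using zD finD NyD by (simp add: finite_subset)
    moreover have "card Ny = (n - 3) choose 3" unfolding Ny_def by (rule card_Nb[OF yV(1)])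
    moreover have "card D + card C + card R = card (KV n)"
    proof -
      have finC: "finite C" using CV finite_KV finite_subset by blast
      have "D \<union> (C \<union> R) = KV n" using CV RV by (auto simp: D_def)
      then have "card (KV n) = card (D \<union> (C \<union> R))" by simp
      also have "\<dots> = card D + card (C \<union> R)" using finD finC finR by (intro card_Un_disjoint) (auto simp: D_def)
      also have "card (C \<union> R) = card C + card R" using finC finR disj by (intro card_Un_disjoint) auto
      finally show ?thesis by simp
    qed
    ultimately show ?thesis using card_KV[of n] by linarith
  qed
qed



context
  fixes V :: "'a set" and E :: "'a \<Rightarrow> 'a \<Rightarrow> bool" and S :: "'a set"
  assumes Esym: "\<And>a b. E a b \<Longrightarrow> E b a"
begin

abbreviation "G \<equiv> del_adj V E S"

lemma rt_in: "G\<^sup>*\<^sup>* x y \<Longrightarrow> x \<noteq> y \<Longrightarrow> x \<in> V - S \<and> y \<in> V - S"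
proof (induction rule: rtranclp_induct)
  case base then show ?case by simp
next
  case (step y z)
  then show ?case by (cases "x = y") (auto simp: del_adj_def)
qed

lemma rt_sym: "G\<^sup>*\<^sup>* x y \<Longrightarrow> G\<^sup>*\<^sup>* y x"
proof (induction rule: rtranclp_induct)
  case base then show ?case by simp
next
  case (step y z)
  then have "G z y" using Esym by (auto simp: del_adj_def)
  then show ?case using step(3) by (rule converse_rtranclp_into_rtranclp)
qed

definition cmp where "cmp x = {y \<in> V - S. G\<^sup>*\<^sup>* x y}"

lemma comps_def': "components_del V E S = cmp ` (V - S)"
  by (simp add: components_del_def cmp_def)

lemma cmp_self: "x \<in> V - S \<Longrightarrow> x \<in> cmp x"
  by (simp add: cmp_def)

lemma cmp_eq: assumes "y \<in> cmp x" shows "cmp y = cmp x"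
proof -
  have xy: "G\<^sup>*\<^sup>* x y" using assms by (simp add: cmp_def)
  show ?thesis
  proof (rule set_eqI, rule iffI)
    fix z assume "z \<in> cmp y"
    then show "z \<in> cmp x" using xy by (auto simp: cmp_def intro: rtranclp_trans)
  next
    fix z assume "z \<in> cmp x"
    then show "z \<in> cmp y" using rt_sym[OF xy] by (auto simp: cmp_def intro: rtranclp_trans)
  qed
qed

lemma comp_sub: "K \<in> components_del V E S \<Longrightarrow> K \<subseteq> V - S"
  by (auto simp: comps_def' cmp_def)

lemma comp_ne: "K \<in> components_del V E S \<Longrightarrow> K \<noteq> {}"
  unfolding comps_def' using cmp_self by blast

lemma comp_disj: "K1 \<in> components_del V E S \<Longrightarrow> K2 \<in> components_del V E S \<Longrightarrow> K1 \<inter> K2 \<noteq> {} \<Longrightarrow> K1 = K2"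
proof -
  assume h: "K1 \<in> components_del V E S" "K2 \<in> components_del V E S" "K1 \<inter> K2 \<noteq> {}"
  obtain x1 x2 where x: "K1 = cmp x1" "K2 = cmp x2" using h(1,2) by (auto simp: comps_def')
  obtain z where z: "z \<in> cmp x1" "z \<in> cmp x2" using h(3) x by auto
  have "cmp z = cmp x1" "cmp z = cmp x2" using cmp_eq[OF z(1)] cmp_eq[OF z(2)] by auto
  then show ?thesis using x by simp
qed

lemma comp_of: "x \<in> V - S \<Longrightarrow> cmp x \<in> components_del V E S"
  by (simp add: comps_def')

lemma comp_closed:
  assumes "K \<in> components_del V E S" "a \<in> K" "b \<in> V - S" "E a b"
  shows "b \<in> K"
proof -
  obtain x where x: "x \<in> V - S" "K = cmp x" using assms(1) by (auto simp: comps_def')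
  have "G a b" using assms comp_sub[OF assms(1)] by (auto simp: del_adj_def)
  then have "G\<^sup>*\<^sup>* x b" using assms(2) x by (auto simp: cmp_def intro: rtranclp.rtrancl_into_rtrancl)
  then show ?thesis using x assms(3) by (simp add: cmp_def)
qed

lemma comp_noiso:
  assumes "K \<in> components_del V E S" "a \<in> K" "b \<in> K" "a \<noteq> b"
  shows "\<exists>c\<in>K. E a c"
proof -
  obtain x where x: "x \<in> V - S" "K = cmp x" using assms(1) by (auto simp: comps_def')
  have "cmp a = K" using x assms(2) cmp_eq by simp
  then have "G\<^sup>*\<^sup>* a b" using assms(3) by (auto simp: cmp_def)
  then obtain c where c: "G a c" "G\<^sup>*\<^sup>* c b" using assms(4) by (auto elim: converse_rtranclpE)
  then have "c \<in> cmp a" by (auto simp: cmp_def del_adj_def)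
  then show ?thesis using c \<open>cmp a = K\<close> by (auto simp: del_adj_def)
qed

lemma comps_singletons:
  assumes "\<And>a b. a \<in> V - S \<Longrightarrow> b \<in> V - S \<Longrightarrow> \<not> E a b"
  shows "components_del V E S = (\<lambda>x. {x}) ` (V - S)"
proof -
  have "cmp x = {x}" if "x \<in> V - S" for x
  proof -
    have "G\<^sup>*\<^sup>* x y \<Longrightarrow> y = x" for y
      by (induction rule: rtranclp_induct) (use assms in \<open>auto simp: del_adj_def\<close>)
    then show ?thesis using that by (auto simp: cmp_def)
  qed
  then show ?thesis by (auto simp: comps_def')
qed

end



lemma kadj_sym: "kneser_adj a b \<Longrightarrow> kneser_adj b a"
  by (auto simp: kneser_adj_def)

abbreviation KC :: "nat \<Rightarrow> nat set set \<Rightarrow> nat set set set" where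
  "KC n S \<equiv> components_del (KV n) kneser_adj S"

definition bd :: "nat set set \<Rightarrow> nat set set \<Rightarrow> nat set set" where
  "bd S K = {T\<in>S. \<exists>k\<in>K. T \<inter> k = {}}"

lemma finite_KC: "finite (KC n S)"
  unfolding components_del_def using finite_KV by simp

lemma KC_facts:
  assumes "S \<subseteq> KV n" "K \<in> KC n S"
  shows "K \<subseteq> KV n - S" "K \<noteq> {}" "finite K"
  using comp_sub[OF kadj_sym assms(2)] comp_ne[OF kadj_sym assms(2)] finite_KV
  by (auto intro: finite_subset)

lemma KC_split:
  assumes S: "S \<subseteq> KV n" and K: "K \<in> KC n S"
  defines "RK \<equiv> KV n - K - bd S K"
  shows "card (KV n) = card K + card (bd S K) + card RK"
    and "\<And>k r. k \<in> K \<Longrightarrow> r \<in> RK \<Longrightarrow> k \<inter> r \<noteq> {}"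
    and "K \<inter> RK = {}" "RK \<subseteq> KV n"
    and "\<And>K'. K' \<in> KC n S \<Longrightarrow> K' \<noteq> K \<Longrightarrow> K' \<subseteq> RK"
proof -
  have Ksub: "K \<subseteq> KV n - S" using KC_facts[OF S K] by simp
  have bsub: "bd S K \<subseteq> S" by (auto simp: bd_def)
  have fin: "finite (KV n)" by (rule finite_KV)
  have finb: "finite (bd S K)" by (rule finite_subset[OF _ fin]) (use bsub S in auto)
  have finK: "finite K" by (rule finite_subset[OF _ fin]) (use Ksub in auto)
  have "KV n = K \<union> bd S K \<union> RK" using Ksub bsub S by (auto simp: RK_def)
  moreover have "card (K \<union> bd S K) = card K + card (bd S K)"
    using Ksub bsub finb finK by (intro card_Un_disjoint) auto
  moreover have "card (K \<union> bd S K \<union> RK) = card (K \<union> bd S K) + card RK"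
    using fin finb finK by (intro card_Un_disjoint) (auto simp: RK_def)
  ultimately show "card (KV n) = card K + card (bd S K) + card RK" by simp
  show "K \<inter> RK = {}" "RK \<subseteq> KV n" by (auto simp: RK_def)
  show "k \<inter> r \<noteq> {}" if k: "k \<in> K" and r: "r \<in> RK" for k r
  proof
    assume kr: "k \<inter> r = {}"
    show False
    proof (cases "r \<in> S")
      case True
      then have "r \<in> bd S K" using k kr by (auto simp: bd_def inf_commute)
      then show False using r by (simp add: RK_def)
    next
      case False
      then have "r \<in> K" using comp_closed[OF kadj_sym K k] r kr by (auto simp: RK_def kneser_adj_def)
      then show False using r by (simp add: RK_def)
    qed
  qed
  show "K' \<subseteq> RK" if K': "K' \<in> KC n S" "K' \<noteq> K" for K'
  proof -
    have "K' \<subseteq> KV n - S" using KC_facts[OF S K'(1)] by simp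
    moreover have "K' \<inter> K = {}" using comp_disj[OF kadj_sym K'(1) K] K'(2) by blast
    ultimately show ?thesis using bsub by (auto simp: RK_def)
  qed
qed

lemma bd_ge:
  assumes n: "9 \<le> n" and S: "S \<subseteq> KV n" and c2: "2 \<le> num_components (KV n) kneser_adj S"
    and K: "K \<in> KC n S"
  shows "(n - 3) choose 3 \<le> card (bd S K)"
proof -
  define RK where "RK = KV n - K - bd S K"
  note sp = KC_split[OF S K, folded RK_def]
  have "card (KC n S) \<ge> 2" using c2 by (simp add: num_components_def)
  then obtain K' where K': "K' \<in> KC n S" "K' \<noteq> K"
  proof -
    assume h: "\<And>K'. K' \<in> KC n S \<Longrightarrow> K' \<noteq> K \<Longrightarrow> thesis"
    show thesis
    proof (rule ccontr)
      assume "\<not> thesis"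
      then have "KC n S \<subseteq> {K}" using h by blast
      then have "card (KC n S) \<le> 1" using card_mono[of "{K}" "KC n S"] by simp
      then show False using \<open>card (KC n S) \<ge> 2\<close> by simp
    qed
  qed
  have "RK \<noteq> {}" using sp(5)[OF K'] KC_facts[OF S K'(1)] by blast
  moreover have "K \<noteq> {}" "K \<subseteq> KV n" using KC_facts[OF S K] by auto
  ultimately have "card K + card RK + ((n - 3) choose 3) \<le> n choose 3"
    using L_bound[OF n _ sp(4) _ _ sp(3) sp(2)] by blast
  then show ?thesis using sp(1) card_KV[of n] by linarith
qed

lemma bd_gt:
  assumes n: "9 \<le> n" and S: "S \<subseteq> KV n" and K: "K \<in> KC n S"
    and nonsing: "a \<in> K" "b \<in> K" "a \<noteq> b"
    and R2: "2 \<le> card (KV n - K - bd S K)"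
  shows "(n - 3) choose 3 < card (bd S K)"
proof -
  define RK where "RK = KV n - K - bd S K"
  note sp = KC_split[OF S K, folded RK_def]
  have KV: "K \<noteq> {}" "K \<subseteq> KV n" using KC_facts[OF S K] by auto
  have noiso: "\<exists>c'\<in>K. c \<inter> c' = {}" if c: "c \<in> K" for c
  proof -
    obtain d where "d \<in> K" "d \<noteq> c" using nonsing by (cases "c = a") auto
    then obtain c' where "c' \<in> K" "kneser_adj c c'" using comp_noiso[OF kadj_sym K c] by blast
    then show ?thesis by (auto simp: kneser_adj_def)
  qed
  have "card K + card RK + ((n - 3) choose 3) < n choose 3"
    using L_strict[OF n KV(2) sp(4) KV(1) sp(3) sp(2) noiso] R2 by (simp add: RK_def)
  then show ?thesis using sp(1) card_KV[of n] by linarith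
qed

lemma a_bound:
  assumes n: "9 \<le> n" and S: "S \<subseteq> KV n" and T: "T \<in> S"
  shows "card {K\<in>KC n S. T \<in> bd S K} \<le> (n - 4) choose 2"
proof -
  define A where "A = {K\<in>KC n S. T \<in> bd S K}"
  define f where "f K = (SOME k. k \<in> K \<and> T \<inter> k = {})" for K
  have fK: "f K \<in> K \<and> T \<inter> f K = {}" if "K \<in> A" for K
  proof -
    have "\<exists>k. k \<in> K \<and> T \<inter> k = {}" using that by (auto simp: A_def bd_def)
    then show ?thesis unfolding f_def by (rule someI_ex)
  qed
  have TV: "T \<in> KV n" using T S by auto
  define X where "X = {1..n} - T"
  have cX: "card X = n - 3"
  proof -
    have "T \<subseteq> {1..n}" "card T = 3" "finite T" using TV KV_finite_elem by (auto simp: KV_iff)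
    then show ?thesis by (simp add: X_def card_Diff_subset)
  qed
  have finX: "finite X" by (simp add: X_def)
  have inj: "inj_on f A"
  proof (rule inj_onI)
    fix K K' assume KK: "K \<in> A" "K' \<in> A" "f K = f K'"
    then have "K \<inter> K' \<noteq> {}" using fK[OF KK(1)] fK[OF KK(2)] by auto
    moreover have "K \<in> KC n S" "K' \<in> KC n S" using KK by (auto simp: A_def)
    ultimately show "K = K'" using comp_disj[where E=kneser_adj and V="KV n" and S=S, OF kadj_sym] by blast
  qed
  have Fsub: "f ` A \<subseteq> {B. B \<subseteq> X \<and> card B = 3}"
  proof
    fix B assume "B \<in> f ` A"
    then obtain K where K: "K \<in> A" "B = f K" by auto
    have "B \<in> KV n" using fK[OF K(1)] K KC_facts[OF S, of K] by (auto simp: A_def)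
    then show "B \<in> {B. B \<subseteq> X \<and> card B = 3}" using fK[OF K(1)] K by (auto simp: KV_iff X_def)
  qed
  have Fint: "\<forall>B\<in>f ` A. \<forall>B'\<in>f ` A. B \<inter> B' \<noteq> {}"
  proof (intro ballI)
    fix B B' assume "B \<in> f ` A" "B' \<in> f ` A"
    then obtain K K' where K: "K \<in> A" "K' \<in> A" "B = f K" "B' = f K'" by auto
    have KC: "K \<in> KC n S" "K' \<in> KC n S" using K by (auto simp: A_def)
    show "B \<inter> B' \<noteq> {}"
    proof
      assume dis: "B \<inter> B' = {}"
      have BV: "B \<in> KV n - S" "B' \<in> KV n - S" using fK[OF K(1)] fK[OF K(2)] K KC_facts[OF S KC(1)] KC_facts[OF S KC(2)] by auto
      show False
      proof (cases "K = K'")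
        case True
        then have "B = B'" using K by simp
        then have "B = {}" using dis by simp
        then show False using BV by (auto simp: KV_iff)
      next
        case False
        have "B' \<in> K" using comp_closed[OF kadj_sym KC(1), of B B'] fK[OF K(1)] K BV dis by (auto simp: kneser_adj_def)
        moreover have "B' \<in> K'" using fK[OF K(2)] K by simp
        ultimately have "K = K'" using comp_disj[OF kadj_sym KC] by blast
        then show False using False by simp
      qed
    qed
  qed
  have "card (f ` A) \<le> (card X - 1) choose 2"
    using ekr3[OF finX _ Fsub Fint] cX n by simp
  then show ?thesis using card_image[OF inj] cX by (simp add: A_def)
qed

lemma sum_bd:
  assumes n: "9 \<le> n" and S: "S \<subseteq> KV n"
  shows "(\<Sum>K\<in>KC n S. card (bd S K)) \<le> card S * ((n - 4) choose 2)"
proof -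
  have finS: "finite S" using S finite_KV finite_subset by blast
  have "(\<Sum>K\<in>KC n S. card (bd S K)) = (\<Sum>K\<in>KC n S. \<Sum>T\<in>{T\<in>S. T \<in> bd S K}. (1::nat))"
  proof (rule sum.cong[OF refl])
    fix K
    have "{T\<in>S. T \<in> bd S K} = bd S K" by (auto simp: bd_def)
    then show "card (bd S K) = (\<Sum>T\<in>{T\<in>S. T \<in> bd S K}. (1::nat))" by simp
  qed
  also have "\<dots> = (\<Sum>T\<in>S. \<Sum>K\<in>{K\<in>KC n S. T \<in> bd S K}. (1::nat))"
    by (rule sum.swap_restrict[OF finite_KC finS])
  also have "\<dots> \<le> (\<Sum>T\<in>S. (n - 4) choose 2)"
  proof (rule sum_mono)
    fix T assume "T \<in> S"
    then show "(\<Sum>K\<in>{K\<in>KC n S. T \<in> bd S K}. (1::nat)) \<le> (n - 4) choose 2"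
      using a_bound[OF n S] by simp
  qed
  also have "\<dots> = card S * ((n - 4) choose 2)" by simp
  finally show ?thesis .
qed



lemma binom_id0: "Suc m * (m choose 2) = 3 * (Suc m choose 3)"
proof -
  have "Suc m * (m choose 2) = (Suc m choose Suc 2) * Suc 2" by (rule Suc_times_binomial_eq)
  also have "Suc 2 = 3" by simp
  finally show ?thesis by (simp add: ac_simps)
qed

lemma binom_id1: "9 \<le> n \<Longrightarrow> 3 * ((n - 3) choose 3) = (n - 3) * ((n - 4) choose 2)"
proof -
  assume n: "9 \<le> n"
  then have "n - 3 = Suc (n - 4)" by simp
  then show ?thesis using binom_id0[of "n - 4"] by simp
qed

lemma binom_id2: "9 \<le> n \<Longrightarrow> 3 * (n choose 3) = n * ((n - 1) choose 2)"
proof -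
  assume n: "9 \<le> n"
  then have "n = Suc (n - 1)" by simp
  then show ?thesis using binom_id0[of "n - 1"] by metis
qed

lemma binom_pos: "9 \<le> n \<Longrightarrow> 10 \<le> (n - 4) choose 2"
proof -
  assume n: "9 \<le> n"
  have "(5::nat) choose 2 \<le> (n - 4) choose 2" using n by (intro binomial_right_mono) simp
  moreover have "(5::nat) choose 2 = 10" by (simp add: choose_two)
  ultimately show ?thesis by simp
qed

lemma d_pos: "9 \<le> n \<Longrightarrow> 0 < (n - 3) choose 3"
  by (intro zero_less_binomial) simp

lemma cut_basic:
  assumes n: "9 \<le> n" and vc: "vertex_cut (KV n) kneser_adj S"
  shows "num_components (KV n) kneser_adj S * ((n - 3) choose 3) \<le> (\<Sum>K\<in>KC n S. card (bd S K))"
    and "(\<Sum>K\<in>KC n S. card (bd S K)) \<le> card S * ((n - 4) choose 2)"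
proof -
  have S: "S \<subseteq> KV n" and c2: "2 \<le> num_components (KV n) kneser_adj S" using vc by (auto simp: vertex_cut_def)
  have "(\<Sum>K\<in>KC n S. (n - 3) choose 3) \<le> (\<Sum>K\<in>KC n S. card (bd S K))"
    by (rule sum_mono) (rule bd_ge[OF n S c2])
  then show "num_components (KV n) kneser_adj S * ((n - 3) choose 3) \<le> (\<Sum>K\<in>KC n S. card (bd S K))"
    by (simp add: num_components_def)
  show "(\<Sum>K\<in>KC n S. card (bd S K)) \<le> card S * ((n - 4) choose 2)" by (rule sum_bd[OF n S])
qed

lemma ratio_lb:
  assumes n: "9 \<le> n" and vc: "vertex_cut (KV n) kneser_adj S"
  shows "real n / 3 - 1 \<le> real (card S) / real (num_components (KV n) kneser_adj S)"
proof -
  define c where "c = num_components (KV n) kneser_adj S"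
  have c2: "2 \<le> c" using vc by (auto simp: vertex_cut_def c_def)
  have "c * ((n - 3) choose 3) \<le> card S * ((n - 4) choose 2)"
    using cut_basic[OF n vc] unfolding c_def by linarith
  then have "c * (3 * ((n - 3) choose 3)) \<le> (3 * card S) * ((n - 4) choose 2)" by simp
  then have "(c * (n - 3)) * ((n - 4) choose 2) \<le> (3 * card S) * ((n - 4) choose 2)"
    using binom_id1[OF n] by (simp add: ac_simps)
  then have le: "c * (n - 3) \<le> 3 * card S" using binom_pos[OF n] n by simp
  have "real n / 3 - 1 = real (n - 3) / 3" using n by (simp add: of_nat_diff)
  also have "\<dots> \<le> real (card S) / real c"
  proof -
    have "real (c * (n - 3)) \<le> real (3 * card S)" using le by (simp only: of_nat_le_iff)
    then have "real (n - 3) * real c \<le> 3 * real (card S)" by (simp add: ac_simps)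
    then show ?thesis using c2 by (simp add: field_simps)
  qed
  finally show ?thesis by (simp add: c_def)
qed

lemma card_star:
  assumes n: "9 \<le> n"
  shows "card {A\<in>KV n. 1 \<in> A} = (n - 1) choose 2"
proof -
  define B2 where "B2 = {B. B \<subseteq> {2..n} \<and> card B = 2}"
  have eq: "{A\<in>KV n. 1 \<in> A} = insert 1 ` B2"
  proof (rule set_eqI, rule iffI)
    fix A assume A: "A \<in> {A\<in>KV n. 1 \<in> A}"
    then have A1: "A \<subseteq> {1..n}" "card A = 3" "1 \<in> A" "finite A" using KV_finite_elem by (auto simp: KV_iff)
    have "A - {1} \<in> B2" using A1 by (auto simp: B2_def)
    moreover have "A = insert 1 (A - {1})" using A1 by auto
    ultimately show "A \<in> insert 1 ` B2" by blast
  next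
    fix A assume "A \<in> insert 1 ` B2"
    then obtain B where B: "B \<subseteq> {2..n}" "card B = 2" "A = insert 1 B" by (auto simp: B2_def)
    have "finite B" "1 \<notin> B" using B(1) by (auto intro: finite_subset)
    then have "card A = 3" using B by simp
    moreover have "A \<subseteq> {1..n}" using B n by auto
    ultimately show "A \<in> {A\<in>KV n. 1 \<in> A}" using B by (simp add: KV_iff)
  qed
  have inj: "inj_on (insert 1) B2"
  proof (rule inj_onI)
    fix B B' assume "B \<in> B2" "B' \<in> B2" "insert 1 B = insert 1 B'"
    moreover have "1 \<notin> B" "1 \<notin> B'" using \<open>B \<in> B2\<close> \<open>B' \<in> B2\<close> by (auto simp: B2_def)
    ultimately show "B = B'" by (metis insert_ident)
  qed
  have "card B2 = card {2..n} choose 2" unfolding B2_def by (rule n_subsets) simp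
  then show ?thesis using eq card_image[OF inj] by simp
qed

lemma star_indep: "a \<in> {A\<in>KV n. 1 \<in> A} \<Longrightarrow> b \<in> {A\<in>KV n. 1 \<in> A} \<Longrightarrow> \<not> kneser_adj a b"
  by (auto simp: kneser_adj_def)

lemma star_cut:
  assumes n: "9 \<le> n"
  defines "S0 \<equiv> KV n - {A\<in>KV n. 1 \<in> A}"
  shows "vertex_cut (KV n) kneser_adj S0"
    and "real (card S0) / real (num_components (KV n) kneser_adj S0) = real n / 3 - 1"
proof -
  define I0 where "I0 = {A\<in>KV n. 1 \<in> A}"
  have VS: "KV n - S0 = I0" by (auto simp: S0_def I0_def)
  have "components_del (KV n) kneser_adj S0 = (\<lambda>x. {x}) ` (KV n - S0)"
    by (rule comps_singletons[OF kadj_sym]) (use star_indep in \<open>auto simp: S0_def\<close>)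
  then have nc: "num_components (KV n) kneser_adj S0 = card I0"
    unfolding num_components_def VS by (simp add: card_image)
  have cI: "card I0 = (n - 1) choose 2" unfolding I0_def by (rule card_star[OF n])
  have a10: "10 \<le> (n - 1) choose 2"
  proof -
    have "(5::nat) choose 2 \<le> (n - 1) choose 2" using n by (intro binomial_right_mono) simp
    moreover have "(5::nat) choose 2 = 10" by (simp add: choose_two)
    ultimately show ?thesis by simp
  qed
  show "vertex_cut (KV n) kneser_adj S0"
    unfolding vertex_cut_def using nc cI a10 by (auto simp: S0_def)
  have I0V: "I0 \<subseteq> KV n" by (auto simp: I0_def)
  have cS0: "card S0 = (n choose 3) - ((n - 1) choose 2)"
  proof -
    have "card (KV n - I0) = card (KV n) - card I0"
      using I0V finite_subset[OF I0V finite_KV] by (rule card_Diff_subset[rotated])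
    then show ?thesis unfolding S0_def I0_def[symmetric] using card_KV cI by simp
  qed
  have id2: "3 * (n choose 3) = n * ((n - 1) choose 2)" by (rule binom_id2[OF n])
  have le: "(n - 1) choose 2 \<le> n choose 3" using card_mono[OF finite_KV I0V] card_KV cI by simp
  have "real (card S0) = real (n choose 3) - real ((n - 1) choose 2)" using cS0 le by (simp add: of_nat_diff)
  moreover have "3 * real (n choose 3) = real n * real ((n - 1) choose 2)"
    using arg_cong[OF id2, of real] by simp
  ultimately have h: "real (card S0) = real (n choose 3) - real ((n - 1) choose 2)"
    "3 * real (n choose 3) = real n * real ((n - 1) choose 2)" by auto
  have apos: "real ((n - 1) choose 2) > 0" using a10 by linarith
  have "real (card S0) / real ((n - 1) choose 2) = real (n choose 3) / real ((n - 1) choose 2) - 1"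
    using apos h(1) by (simp add: diff_divide_distrib)
  also have "real (n choose 3) / real ((n - 1) choose 2) = real n / 3"
    using apos h(2) by (simp add: field_simps)
  finally show "real (card S0) / real (num_components (KV n) kneser_adj S0) = real n / 3 - 1"
    using nc cI by simp
qed

lemma eq_case:
  assumes n: "9 \<le> n" and vc: "vertex_cut (KV n) kneser_adj S"
    and eq: "real (card S) / real (num_components (KV n) kneser_adj S) = real n / 3 - 1"
  shows "\<exists>I. maximum_independent_set (KV n) kneser_adj I \<and> S = KV n - I"
proof -
  define c where "c = num_components (KV n) kneser_adj S"
  define d where "d = (n - 3) choose 3"
  define e where "e = (n - 4) choose 2"
  have S: "S \<subseteq> KV n" and c2: "2 \<le> c" using vc by (auto simp: vertex_cut_def c_def)
  have cKC: "card (KC n S) = c" by (simp add: c_def num_components_def)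
  have finS: "finite S" using S finite_KV finite_subset by blast
  have e10: "10 \<le> e" unfolding e_def by (rule binom_pos[OF n])
  have dpos: "0 < d" unfolding d_def by (rule d_pos[OF n])
  have "real (card S) = (real n / 3 - 1) * real c" using eq c2 by (simp add: c_def field_simps)
  then have "real (3 * card S) = real ((n - 3) * c)" using n by (simp add: of_nat_diff field_simps)
  then have e3: "3 * card S = (n - 3) * c" by (simp only: of_nat_eq_iff)
  have "3 * (card S * e) = (3 * card S) * e" by (simp only: mult.assoc)
  also have "\<dots> = c * ((n - 3) * e)" unfolding e3 by (simp only: ac_simps)
  also have "(n - 3) * e = 3 * d" using binom_id1[OF n] by (simp add: d_def e_def)
  finally have "3 * (card S * e) = 3 * (c * d)" by simp
  then have Se: "card S * e = c * d" by simp
  define Sig where "Sig = (\<Sum>K\<in>KC n S. card (bd S K))"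
  have Sig1: "c * d \<le> Sig" using cut_basic(1)[OF n vc] by (simp add: Sig_def c_def d_def)
  have Sig2: "Sig \<le> c * d" using cut_basic(2)[OF n vc] Se by (simp add: Sig_def e_def)
  have bd_eq: "card (bd S K) = d" if K: "K \<in> KC n S" for K
  proof (rule ccontr)
    assume "card (bd S K) \<noteq> d"
    then have "d < card (bd S K)" using bd_ge[OF n S _ K] c2 by (fastforce simp: c_def d_def)
    then have "(\<Sum>K\<in>KC n S. d) < Sig"
      unfolding Sig_def using K bd_ge[OF n S _] c2 finite_KC
      by (intro sum_strict_mono_ex1) (auto simp: c_def d_def)
    then show False using Sig2 cKC by simp
  qed
  have sing: "a = b" if K: "K \<in> KC n S" and ab: "a \<in> K" "b \<in> K" for K a b
  proof (rule ccontr)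
    assume ne: "a \<noteq> b"
    define RK where "RK = KV n - K - bd S K"
    have R1: "card RK \<le> 1"
    proof (rule ccontr)
      assume "\<not> card RK \<le> 1"
      then have "2 \<le> card RK" by simp
      then have "d < card (bd S K)" using bd_gt[OF n S K ab ne] by (simp add: RK_def d_def)
      then show False using bd_eq[OF K] by simp
    qed
    show False
    proof (cases "c \<le> 2")
      case True
      then have c2': "c = 2" using c2 by simp
      have "bd S K \<subseteq> S" by (auto simp: bd_def)
      then have "d \<le> card S" using bd_eq[OF K] card_mono[OF finS] by metis
      then have "d * e \<le> card S * e" by simp
      also have "\<dots> = 2 * d" using Se c2' by simp
      finally have "d * e \<le> d * 2" by simp
      then have "e \<le> 2" using dpos by simp
      then show False using e10 by simp
    next
      case False
      then have "card (KC n S - {K}) \<ge> 2" using cKC K finite_KC by (simp add: card_Diff_singleton)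
      then have "KC n S - {K} \<noteq> {}" by (intro notI) simp
      then obtain K1 where K1: "K1 \<in> KC n S - {K}" by blast
      have "card (KC n S - {K} - {K1}) \<ge> 1" using \<open>card (KC n S - {K}) \<ge> 2\<close> K1 finite_KC
        by (simp add: card_Diff_singleton)
      then have "KC n S - {K} - {K1} \<noteq> {}" by (intro notI) simp
      then obtain K2 where K2: "K2 \<in> KC n S - {K} - {K1}" by blast
      obtain x1 where x1: "x1 \<in> K1" using KC_facts[OF S, of K1] K1 by auto
      obtain x2 where x2: "x2 \<in> K2" using KC_facts[OF S, of K2] K2 by auto
      have "x1 \<noteq> x2"
      proof
        assume "x1 = x2"
        then have "K1 = K2" using comp_disj[where E=kneser_adj and V="KV n" and S=S, OF kadj_sym] K1 K2 x1 x2 by blast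
        then show False using K2 by simp
      qed
      moreover have "x1 \<in> RK" "x2 \<in> RK" using KC_split(5)[OF S K] K1 K2 x1 x2 by (auto simp: RK_def)
      ultimately have "card {x1, x2} \<le> card RK" using finite_KV by (intro card_mono) (auto simp: RK_def)
      then show False using R1 \<open>x1 \<noteq> x2\<close> by simp
    qed
  qed
  define W where "W = KV n - S"
  have indep: "\<not> kneser_adj a b" if "a \<in> W" "b \<in> W" for a b
  proof
    assume adj: "kneser_adj a b"
    have aS: "a \<in> KV n - S" "b \<in> KV n - S" using that by (auto simp: W_def)
    have K: "cmp (KV n) kneser_adj S a \<in> KC n S" by (rule comp_of[OF kadj_sym aS(1)])
    have "a \<in> cmp (KV n) kneser_adj S a" by (rule cmp_self[OF kadj_sym aS(1)])
    moreover then have "b \<in> cmp (KV n) kneser_adj S a" using comp_closed[OF kadj_sym K _ aS(2) adj] by simp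
    ultimately have "a = b" using sing[OF K] by blast
    then have "a = {}" using adj by (simp add: kneser_adj_def)
    then show False using aS by (auto simp: KV_iff)
  qed
  have "KC n S = (\<lambda>x. {x}) ` W"
    unfolding W_def by (rule comps_singletons[OF kadj_sym]) (use indep in \<open>auto simp: W_def\<close>)
  then have cW: "c = card W" using cKC by (simp add: card_image)
  have finW: "finite W" using finite_KV by (simp add: W_def)
  have "card S + card W = n choose 3"
    using card_KV[of n] S finS finW card_Un_disjoint[of S W] by (simp add: W_def Un_absorb1 Un_Diff_cancel)
  then have "3 * (n choose 3) = 3 * card S + 3 * card W" by simp
  also have "\<dots> = (n - 3) * c + 3 * c" using e3 cW by simp
  also have "\<dots> = ((n - 3) + 3) * c" by (simp only: add_mult_distrib)
  also have "(n - 3) + 3 = n" using n by simp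
  finally have "3 * (n choose 3) = n * c" .
  then have "n * c = n * ((n - 1) choose 2)" using binom_id2[OF n] by linarith
  then have "c = (n - 1) choose 2" using n by simp
  then have cW2: "card W = (n - 1) choose 2" using cW by simp
  have "maximum_independent_set (KV n) kneser_adj W"
    unfolding maximum_independent_set_def independent_set_def
  proof (intro conjI allI impI)
    show "W \<subseteq> KV n" by (auto simp: W_def)
    show "\<forall>x\<in>W. \<forall>y\<in>W. \<not> kneser_adj x y" using indep by blast
    fix J assume J: "J \<subseteq> KV n \<and> (\<forall>x\<in>J. \<forall>y\<in>J. \<not> kneser_adj x y)"
    have "card J \<le> (card {1..n} - 1) choose 2"
    proof (rule ekr3)
      show "finite {1..n}" by simp
      show "6 \<le> card {1..n}" using n by simp
      show "J \<subseteq> {A. A \<subseteq> {1..n} \<and> card A = 3}"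
      proof
        fix A assume "A \<in> J"
        then have "A \<in> KV n" using J by blast
        then show "A \<in> {A. A \<subseteq> {1..n} \<and> card A = 3}" by (simp add: KV_iff)
      qed
      show "\<forall>A\<in>J. \<forall>B\<in>J. A \<inter> B \<noteq> {}" using J by (auto simp: kneser_adj_def)
    qed
    then show "card J \<le> card W" using cW2 by simp
  qed
  moreover have "S = KV n - W" using S by (auto simp: W_def)
  ultimately show ?thesis by blast
qed


theorem theorem4p1:
  fixes n :: nat
  assumes "n \<ge> 9"
  shows "toughness (kneser_vertices n 3) kneser_adj = real n / 3 - 1 \<and>
    (\<forall>S. vertex_cut (kneser_vertices n 3) kneser_adj S \<and>
         real (card S) / real (num_components (kneser_vertices n 3) kneser_adj S) = real n / 3 - 1
       \<longrightarrow> (\<exists>I. maximum_independent_set (kneser_vertices n 3) kneser_adj I \<and>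
                S = kneser_vertices n 3 - I))"
proof
  have n: "9 \<le> n" using assms by simp
  define X where "X = {real (card S) / real (num_components (KV n) kneser_adj S) | S. vertex_cut (KV n) kneser_adj S}"
  have "toughness (KV n) kneser_adj = Inf X" by (simp add: toughness_def X_def)
  also have "Inf X = real n / 3 - 1"
  proof (rule cInf_eq_minimum)
    show "real n / 3 - 1 \<in> X"
    proof -
      define S0 where "S0 = KV n - {A\<in>KV n. 1 \<in> A}"
      have "vertex_cut (KV n) kneser_adj S0" "real (card S0) / real (num_components (KV n) kneser_adj S0) = real n / 3 - 1"
        using star_cut[OF n] unfolding S0_def by auto
      then show ?thesis unfolding X_def by force
    qed
    fix x assume "x \<in> X"
    then obtain S where "vertex_cut (KV n) kneser_adj S"
      "x = real (card S) / real (num_components (KV n) kneser_adj S)" by (auto simp: X_def)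
    then show "real n / 3 - 1 \<le> x" using ratio_lb[OF n] by simp
  qed
  finally show "toughness (KV n) kneser_adj = real n / 3 - 1" .
  show "\<forall>S. vertex_cut (KV n) kneser_adj S \<and>
         real (card S) / real (num_components (KV n) kneser_adj S) = real n / 3 - 1
       \<longrightarrow> (\<exists>I. maximum_independent_set (KV n) kneser_adj I \<and> S = KV n - I)"
    using eq_case[OF n] by blast
qed

end
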